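(* Let $p=(p_1,\dots,p_K)$ be a probability vector with $p_j>0$ for all $j$, and let $q^1,\dots,q^b$ be probability vectors on $\{1,\dots,K\}$ (so $q^\ell_j\in[0,1]$). Then $$\sum_{j=1}^K\frac{p_j}{1-(1-p_j)(1-q^1_j)\cdots(1-q^b_j)}\le\sum_{j=1}^K\frac{p_j}{p_j+q^1_j+q^2_j+\cdots+q^b_j}+1.$$
   Context: In the paper, $p$ is the agent's arm-selection distribution (positive in every coordinate under the algorithm) and $q^\ell$ the distribution of neighbor $\ell$. *)

theory Defs
  imports "HOL-Analysis.Analysis"
begin

end

theory Submission
  imports Defs
begin

lemma prod_bound:
  fixes a :: "nat \<Rightarrow> real"
  assumes "finite A" "\<And>i. i \<in> A \<Longrightarrow> 0 \<le> a i \<and> a i \<le> 1"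
  shows "(\<Prod>i\<in>A. 1 - a i) * (1 + (\<Sum>i\<in>A. a i)) \<le> 1 \<and> 0 \<le> (\<Prod>i\<in>A. 1 - a i)"
  using assms
proof (induction A rule: finite_induct)
  case empty
  then show ?case by simp
next
  case (insert x F)
  define P where "P = (\<Prod>i\<in>F. 1 - a i)"
  define S where "S = (\<Sum>i\<in>F. a i)"
  have IH: "P * (1 + S) \<le> 1" "0 \<le> P" using insert unfolding P_def S_def by auto
  have ax: "0 \<le> a x" "a x \<le> 1" using insert by auto
  have S0: "0 \<le> S" unfolding S_def using insert by (auto intro: sum_nonneg)
  have "(1 - a x) * (1 + S + a x) \<le> 1 + S" using ax S0
    by (simp add: algebra_simps)
  hence "P * ((1 - a x) * (1 + S + a x)) \<le> P * (1 + S)"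
    using IH(2) by (rule mult_left_mono)
  hence "(1 - a x) * P * (1 + (a x + S)) \<le> 1" using IH(1) by (simp add: algebra_simps)
  moreover have "0 \<le> (1 - a x) * P" using ax IH(2) by simp
  ultimately show ?case using insert unfolding P_def S_def by simp
qed

lemma term_bound:
  fixes p P s :: real
  assumes "0 < p" "p \<le> 1" "0 \<le> s" "0 \<le> P" "(1 - p) * P * (1 + (p + s)) \<le> 1"
  shows "p / (1 - (1 - p) * P) \<le> p / (p + s) + p"
proof -
  define x where "x = p + s"
  have x0: "0 < x" using assms unfolding x_def by simp
  define D where "D = 1 - (1 - p) * P"
  have "D * (1 + x) \<ge> x" using assms(5) unfolding D_def x_def by (simp add: algebra_simps)
  hence D0: "D > 0" using x0 by (smt (verit) mult_nonpos_nonneg)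
  have "p / D \<le> p * (1 + x) / x"
    using D0 x0 assms(1) \<open>D * (1 + x) \<ge> x\<close>
    by (simp add: divide_simps) (smt (verit) mult_left_mono mult.commute mult.assoc)
  also have "\<dots> = p / x + p" using x0 by (simp add: field_simps)
  finally show ?thesis unfolding D_def x_def .
qed

theorem mainTheorem6:
  fixes K b :: nat and p :: "nat \<Rightarrow> real" and q :: "nat \<Rightarrow> nat \<Rightarrow> real"
  assumes p_pos: "\<And>j. j \<in> {1..K} \<Longrightarrow> p j > 0"
    and p_sum: "(\<Sum>j=1..K. p j) = 1"
    and q_nonneg: "\<And>l j. l \<in> {1..b} \<Longrightarrow> j \<in> {1..K} \<Longrightarrow> q l j \<ge> 0"
    and q_sum: "\<And>l. l \<in> {1..b} \<Longrightarrow> (\<Sum>j=1..K. q l j) = 1"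
  shows "(\<Sum>j=1..K. p j / (1 - (1 - p j) * (\<Prod>l=1..b. (1 - q l j))))
         \<le> (\<Sum>j=1..K. p j / (p j + (\<Sum>l=1..b. q l j))) + 1"
proof -
  have ple: "p j \<le> 1" if "j \<in> {1..K}" for j
  proof -
    have "p j \<le> (\<Sum>j=1..K. p j)"
      by (rule member_le_sum) (use that p_pos in \<open>auto simp: less_imp_le\<close>)
    thus ?thesis using p_sum by simp
  qed
  have qle: "q l j \<le> 1" if "l \<in> {1..b}" "j \<in> {1..K}" for l j
  proof -
    have "q l j \<le> (\<Sum>j=1..K. q l j)"
      by (rule member_le_sum) (use that q_nonneg in auto)
    thus ?thesis using q_sum that by simp
  qed
  have "(\<Sum>j=1..K. p j / (1 - (1 - p j) * (\<Prod>l=1..b. (1 - q l j))))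
        \<le> (\<Sum>j=1..K. p j / (p j + (\<Sum>l=1..b. q l j)) + p j)"
  proof (rule sum_mono)
    fix j assume j: "j \<in> {1..K}"
    have pb: "(\<Prod>i\<in>insert 0 {1..b}. 1 - (if i = 0 then p j else q i j)) *
        (1 + (\<Sum>i\<in>insert 0 {1..b}. (if i = 0 then p j else q i j))) \<le> 1 \<and>
        0 \<le> (\<Prod>i\<in>insert 0 {1..b}. 1 - (if i = 0 then p j else q i j))"
      by (rule prod_bound) (use j p_pos ple q_nonneg qle in \<open>auto simp: less_imp_le\<close>)
    have e1: "(\<Prod>i\<in>insert 0 {1..b}. 1 - (if i = 0 then p j else q i j)) = (1 - p j) * (\<Prod>l=1..b. (1 - q l j))"
      by (simp add: prod.insert)
    have e2: "(\<Sum>i\<in>insert 0 {1..b}. (if i = 0 then p j else q i j)) = p j + (\<Sum>l=1..b. q l j)"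
      by (simp add: sum.insert)
    have P0: "0 \<le> (\<Prod>l=1..b. (1 - q l j))"
      by (rule prod_nonneg) (use j qle in auto)
    have s0: "0 \<le> (\<Sum>l=1..b. q l j)"
      by (rule sum_nonneg) (use j q_nonneg in auto)
    show "p j / (1 - (1 - p j) * (\<Prod>l=1..b. (1 - q l j))) \<le> p j / (p j + (\<Sum>l=1..b. q l j)) + p j"
      by (rule term_bound) (use pb e1 e2 P0 s0 p_pos ple j in \<open>auto simp: mult.assoc\<close>)
  qed
  also have "\<dots> = (\<Sum>j=1..K. p j / (p j + (\<Sum>l=1..b. q l j))) + 1"
    using p_sum by (simp add: sum.distrib)
  finally show ?thesis .
qed

end
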